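(* Let $\mathcal X$ be a compact set in a normed space (dual norm $\|\cdot\|_*$), and let $l_1,\dots,l_N$ and $v_1,\dots,v_N$ be differentiable functions on $\mathcal X$. Write $l_{1:n}=\sum_{m=1}^nl_m$ ($l_{1:0}\equiv0$). Suppose in each round $n$, $l_{1:n}$ is $\mu_{1:n}$-strongly convex for some $\mu_{1:n}>0$, $v_{n+1}$ is a (possibly nonconvex) function such that $l_{1:n}+v_{n+1}$ is convex (and $v_1$ convex), and the learner plays FTL with prediction: $x_{n}\in\operatorname{arg\,min}_{x\in\mathcal X}(l_{1:n-1}+v_n)(x)$. Then, with $x_n^\star\in\operatorname{arg\,min}_{x\in\mathcal X}l_{1:n}(x)$, $$\sum_{n=1}^N\big(l_{1:n}(x_n)-l_{1:n}(x_n^\star)\big)\le\sum_{n=1}^N\frac1{2\mu_{1:n}}\|\nabla l_n(x_n)-\nabla v_n(x_n)\|_*^2.$$ *)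

theory Defs
  imports "HOL-Analysis.Analysis"
begin

definition strongly_convex_on :: "'a::real_normed_vector set \<Rightarrow> real \<Rightarrow> ('a \<Rightarrow> real) \<Rightarrow> bool" where
  "strongly_convex_on S \<mu> f \<longleftrightarrow>
     (\<forall>x\<in>S. \<forall>y\<in>S. \<forall>t::real. 0 \<le> t \<and> t \<le> 1 \<longrightarrow>
        f (t *\<^sub>R x + (1 - t) *\<^sub>R y) \<le> t * f x + (1 - t) * f y - \<mu> / 2 * t * (1 - t) * (norm (x - y))\<^sup>2)"

definition is_argmin_on :: "'a set \<Rightarrow> ('a \<Rightarrow> real) \<Rightarrow> 'a \<Rightarrow> bool" where
  "is_argmin_on S f x \<longleftrightarrow> x \<in> S \<and> (\<forall>y\<in>S. f x \<le> f y)"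

definition cumloss :: "(nat \<Rightarrow> 'a \<Rightarrow> real) \<Rightarrow> nat \<Rightarrow> 'a \<Rightarrow> real" where
  "cumloss l n x = (\<Sum>m=1..n. l m x)"

definition dual_norm :: "('a::real_normed_vector \<Rightarrow> real) \<Rightarrow> real" where
  "dual_norm g = onorm g"

end

theory Submission
  imports Defs
begin

lemma key:
  fixes X :: "'a::real_normed_vector set" and F f h :: "'a \<Rightarrow> real" and g :: "'a \<Rightarrow> real"
  assumes cX: "convex X" and xX: "x \<in> X" and yX: "y \<in> X"
    and Fe: "\<And>z. z \<in> X \<Longrightarrow> F z = f z + h z"
    and fmin: "\<And>z. z \<in> X \<Longrightarrow> f x \<le> f z"
    and hd: "(h has_derivative g) (at x)"
    and sc: "strongly_convex_on X \<mu> F" and mu: "\<mu> > 0"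
  shows "F x - F y \<le> 1 / (2 * \<mu>) * (onorm g)\<^sup>2"
proof -
  define d where "d = y - x"
  define \<phi> where "\<phi> t = h (x + t *\<^sub>R d)" for t :: real
  have bl: "bounded_linear g" using hd by (rule has_derivative_bounded_linear)
  have "((\<lambda>t. h (x + t *\<^sub>R d)) has_derivative (\<lambda>t. g (t *\<^sub>R d))) (at 0)"
  proof -
    have "((\<lambda>t::real. x + t *\<^sub>R d) has_derivative (\<lambda>t. t *\<^sub>R d)) (at 0)"
      by (auto intro!: derivative_eq_intros)
    moreover have "(h has_derivative g) (at (x + 0 *\<^sub>R d))" using hd by simp
    ultimately show ?thesis using diff_chain_at[of "\<lambda>t::real. x + t *\<^sub>R d" "\<lambda>t. t *\<^sub>R d" 0 h g]
      by (simp add: o_def)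
  qed
  moreover have "(\<lambda>t. g (t *\<^sub>R d)) = (*) (g d)"
    using linear_cmul[OF bounded_linear.linear[OF bl]] by (auto simp: mult.commute)
  ultimately have "(\<phi> has_field_derivative g d) (at 0)"
    unfolding has_field_derivative_def \<phi>_def by simp
  hence lim: "((\<lambda>t. (\<phi> (0 + t) - \<phi> 0) / t) \<longlongrightarrow> g d) (at 0)"
    by (simp add: DERIV_def)
  hence lim2: "((\<lambda>t. (\<phi> t - \<phi> 0) / t) \<longlongrightarrow> g d) (at_right 0)"
    by (auto intro: tendsto_mono[OF at_le])
  have lim3: "((\<lambda>t. F y - F x - \<mu> / 2 * (1 - t) * (norm d)\<^sup>2) \<longlongrightarrow> F y - F x - \<mu> / 2 * (1 - 0) * (norm d)\<^sup>2) (at_right 0)"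
    by (intro tendsto_intros)
  have ev: "eventually (\<lambda>t. (\<phi> t - \<phi> 0) / t \<le> F y - F x - \<mu> / 2 * (1 - t) * (norm d)\<^sup>2) (at_right (0::real))"
    unfolding eventually_at_right_field
  proof (intro exI[of _ 1] conjI allI impI)
    fix t :: real assume t0: "t > 0" and t1: "t < 1"
    have zeq: "x + t *\<^sub>R d = t *\<^sub>R y + (1 - t) *\<^sub>R x"
      by (simp add: d_def algebra_simps)
    have zX: "x + t *\<^sub>R d \<in> X" unfolding zeq
      using cX xX yX t0 t1 by (simp add: convex_def)
    have "F (t *\<^sub>R y + (1 - t) *\<^sub>R x) \<le> t * F y + (1 - t) * F x - \<mu> / 2 * t * (1 - t) * (norm (y - x))\<^sup>2"
      using sc xX yX t0 t1 unfolding strongly_convex_on_def by auto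
    hence A: "F (x + t *\<^sub>R d) \<le> t * F y + (1 - t) * F x - \<mu> / 2 * t * (1 - t) * (norm d)\<^sup>2"
      using zeq d_def by simp
    have "\<phi> t - \<phi> 0 \<le> F (x + t *\<^sub>R d) - F x"
      using Fe[OF zX] Fe[OF xX] fmin[OF zX] unfolding \<phi>_def by simp
    also have "\<dots> \<le> t * (F y - F x - \<mu> / 2 * (1 - t) * (norm d)\<^sup>2)"
      using A by (simp add: algebra_simps)
    finally show "(\<phi> t - \<phi> 0) / t \<le> F y - F x - \<mu> / 2 * (1 - t) * (norm d)\<^sup>2"
      using t0 by (simp add: divide_le_eq mult.commute)
  qed simp
  have gd: "g d \<le> F y - F x - \<mu> / 2 * (norm d)\<^sup>2"
    using tendsto_le[OF _ lim3 lim2 ev] by simp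
  have "\<bar>g d\<bar> \<le> onorm g * norm d" using onorm[OF bl] by simp
  hence gd2: "F x - F y \<le> onorm g * norm d - \<mu> / 2 * (norm d)\<^sup>2" using gd by linarith
  have "0 \<le> (onorm g - \<mu> * norm d)\<^sup>2 / (2 * \<mu>)" using mu by simp
  hence "onorm g * norm d - \<mu> / 2 * (norm d)\<^sup>2 \<le> 1 / (2 * \<mu>) * (onorm g)\<^sup>2"
    using mu by (simp add: power2_eq_square field_simps)
  thus ?thesis using gd2 by linarith
qed

theorem lemma16:
  fixes X :: "'a::real_normed_vector set"
    and l v :: "nat \<Rightarrow> 'a \<Rightarrow> real"
    and Dl Dv :: "nat \<Rightarrow> 'a \<Rightarrow> 'a \<Rightarrow> real"
    and \<mu> :: "nat \<Rightarrow> real"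
    and x xs :: "nat \<Rightarrow> 'a"
    and N :: nat
  assumes "compact X" and "convex X"
    and dl: "\<And>n y. n \<in> {1..N} \<Longrightarrow> y \<in> X \<Longrightarrow> (l n has_derivative Dl n y) (at y)"
    and dv: "\<And>n y. n \<in> {1..N} \<Longrightarrow> y \<in> X \<Longrightarrow> (v n has_derivative Dv n y) (at y)"
    and mu_pos: "\<And>n. n \<in> {1..N} \<Longrightarrow> \<mu> n > 0"
    and sc: "\<And>n. n \<in> {1..N} \<Longrightarrow> strongly_convex_on X (\<mu> n) (cumloss l n)"
    and cv: "\<And>n. n < N \<Longrightarrow> convex_on X (\<lambda>y. cumloss l n y + v (Suc n) y)"
    and play: "\<And>n. n \<in> {1..N} \<Longrightarrow> is_argmin_on X (\<lambda>y. cumloss l (n - 1) y + v n y) (x n)"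
    and opt: "\<And>n. n \<in> {1..N} \<Longrightarrow> is_argmin_on X (cumloss l n) (xs n)"
  shows "(\<Sum>n=1..N. cumloss l n (x n) - cumloss l n (xs n))
           \<le> (\<Sum>n=1..N. 1 / (2 * \<mu> n) * (dual_norm (\<lambda>h. Dl n (x n) h - Dv n (x n) h))\<^sup>2)"

proof -
  have "cumloss l n (x n) - cumloss l n (xs n)
        \<le> 1 / (2 * \<mu> n) * (dual_norm (\<lambda>h. Dl n (x n) h - Dv n (x n) h))\<^sup>2"
    if n: "n \<in> {1..N}" for n
  proof -
    have xn: "x n \<in> X" and fm: "\<And>z. z \<in> X \<Longrightarrow> cumloss l (n - 1) (x n) + v n (x n) \<le> cumloss l (n - 1) z + v n z"
      using play[OF n] unfolding is_argmin_on_def by auto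
    have xsn: "xs n \<in> X" using opt[OF n] unfolding is_argmin_on_def by auto
    have ce: "cumloss l n z = (cumloss l (n - 1) z + v n z) + (l n z - v n z)" for z
    proof -
      have "n = Suc (n - 1)" using n by simp
      then obtain k where k: "n = Suc k" by blast
      show ?thesis unfolding cumloss_def k by (simp add: sum.cl_ivl_Suc)
    qed
    have hd: "((\<lambda>z. l n z - v n z) has_derivative (\<lambda>h. Dl n (x n) h - Dv n (x n) h)) (at (x n))"
      by (rule has_derivative_diff[OF dl[OF n xn] dv[OF n xn]])
    show ?thesis unfolding dual_norm_def
      by (rule key[OF \<open>convex X\<close> xn xsn ce fm hd sc[OF n] mu_pos[OF n]])
  qed
  thus ?thesis by (intro sum_mono) auto
qed

end
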